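(* Let $r\in\mathbb N$, $m\in\mathbb N$, $p\in(0,1)$, and let $h\in L^4\big((\{0,1\}^m)^r,\mu_{m,p}^{\otimes r}\big)$ be symmetric. For $0\le j\le r$ let $h_j(x_1,\ldots,x_j)=\int_{(\{0,1\}^m)^{r-j}}h(x_1,\ldots,x_r)\,d\mu_{m,p}^{\otimes(r-j)}(x_{j+1},\ldots,x_r)$ (so $h_0$ is the constant $\int h\,d\mu_{m,p}^{\otimes r}$) and $\tilde h_j=\Phi_{x_1}\cdots\Phi_{x_j}h_j$. Then for $0\le i<j\le r$, $$\|\tilde h_j\ast_j^i\tilde h_j\|_2\lesssim\|h_j\ast_j^ih_j\|_2,\qquad \|\tilde h_j\ast_i^i\tilde h_j\|_2\lesssim\|h_j\ast_i^ih_j\|_2,$$ $$\|\tilde h_j\ast_i^i\tilde h_i\|_2\lesssim\|h_{j-i}\|_2\left|\int_{(\{0,1\}^m)^r}h\,d\mu_{m,p}^{\otimes r}\right|+\sum_{s=1}^i\|h_{j-i+s}\ast_s^sh_s\|_2,$$ where the implicit constants depend only on $r$.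
   Context: $\mu_{m,p}$ is the measure on $\{0,1\}^m$ with $\mu_{m,p}(x)=p^{|x|}(1-p)^{m-|x|}$, $|x|=\sum_ix_i$; norms are $L^2$ norms with respect to the appropriate product of $\mu_{m,p}$. $\Phi_{x_i}f(x)=f(x)-\int_{\{0,1\}^m}f(x)\,d\mu_{m,p}(x_i)$. Contraction: for $f$ on $(\{0,1\}^m)^k$, $g$ on $(\{0,1\}^m)^l$, $0\le a\le b\le k\wedge l$: $f\ast_b^ag(x_1,\ldots,x_{b-a},y_1,\ldots,y_{k-b},z_1,\ldots,z_{l-b})=\int_{(\{0,1\}^m)^a}f(w,x,y)g(w,x,z)\,d\mu_{m,p}^{\otimes a}(w)$. $a\lesssim b$ means $a\le Cb$ for a constant $C$. *)

theory Defs
  imports Complex_Main "HOL-Library.FuncSet"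
begin

text \<open>Points of {0,1}^m are encoded as subsets of {0..<m} (the support of the 0/1 vector).
  A function of k arguments in {0,1}^m is a map on tuples \<open>nat \<Rightarrow> nat set\<close>;
  only its values on the extensional tuples in \<open>tuples m k\<close> are ever used.\<close>

definition cube :: "nat \<Rightarrow> nat set set" where
  "cube m = Pow {..<m}"

definition mu :: "nat \<Rightarrow> real \<Rightarrow> nat set \<Rightarrow> real" where
  "mu m p x = p ^ card x * (1 - p) ^ (m - card x)"

definition tuples :: "nat \<Rightarrow> nat \<Rightarrow> (nat \<Rightarrow> nat set) set" where
  "tuples m k = PiE {..<k} (\<lambda>_. cube m)"

definition weight :: "nat \<Rightarrow> real \<Rightarrow> nat \<Rightarrow> (nat \<Rightarrow> nat set) \<Rightarrow> real" where
  "weight m p k x = (\<Prod>i<k. mu m p (x i))"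

definition intk :: "nat \<Rightarrow> real \<Rightarrow> nat \<Rightarrow> ((nat \<Rightarrow> nat set) \<Rightarrow> real) \<Rightarrow> real" where
  "intk m p k f = (\<Sum>x\<in>tuples m k. weight m p k x * f x)"

definition norm2 :: "nat \<Rightarrow> real \<Rightarrow> nat \<Rightarrow> ((nat \<Rightarrow> nat set) \<Rightarrow> real) \<Rightarrow> real" where
  "norm2 m p k f = sqrt (intk m p k (\<lambda>x. (f x)\<^sup>2))"

definition app :: "nat \<Rightarrow> (nat \<Rightarrow> 'a) \<Rightarrow> (nat \<Rightarrow> 'a) \<Rightarrow> nat \<Rightarrow> 'a" where
  "app a w y = (\<lambda>i. if i < a then w i else y (i - a))"

definition sh :: "nat \<Rightarrow> (nat \<Rightarrow> 'a) \<Rightarrow> nat \<Rightarrow> 'a" where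
  "sh n u = (\<lambda>i. u (i + n))"

definition symmetric_fun :: "nat \<Rightarrow> nat \<Rightarrow> ((nat \<Rightarrow> nat set) \<Rightarrow> real) \<Rightarrow> bool" where
  "symmetric_fun m r h \<longleftrightarrow>
     (\<forall>\<sigma> x. bij_betw \<sigma> {..<r} {..<r} \<longrightarrow> x \<in> tuples m r \<longrightarrow>
        h (restrict (x \<circ> \<sigma>) {..<r}) = h x)"

definition hj :: "nat \<Rightarrow> real \<Rightarrow> nat \<Rightarrow> ((nat \<Rightarrow> nat set) \<Rightarrow> real) \<Rightarrow> nat
                   \<Rightarrow> (nat \<Rightarrow> nat set) \<Rightarrow> real" where
  "hj m p r h j x = (\<Sum>y\<in>tuples m (r - j). weight m p (r - j) y * h (restrict (app j x y) {..<r}))"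

text \<open>Phi_{x_i} f (x) = f(x) - integral of f over the i-th coordinate (0-based index i)\<close>
definition Phi :: "nat \<Rightarrow> real \<Rightarrow> nat \<Rightarrow> ((nat \<Rightarrow> nat set) \<Rightarrow> real) \<Rightarrow> (nat \<Rightarrow> nat set) \<Rightarrow> real" where
  "Phi m p i f x = f x - (\<Sum>z\<in>cube m. mu m p z * f (x(i := z)))"

fun phis :: "nat \<Rightarrow> real \<Rightarrow> nat \<Rightarrow> ((nat \<Rightarrow> nat set) \<Rightarrow> real) \<Rightarrow> (nat \<Rightarrow> nat set) \<Rightarrow> real" where
  "phis m p 0 f = f"
| "phis m p (Suc j) f = Phi m p j (phis m p j f)"

definition htilde :: "nat \<Rightarrow> real \<Rightarrow> nat \<Rightarrow> ((nat \<Rightarrow> nat set) \<Rightarrow> real) \<Rightarrow> nat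
                       \<Rightarrow> (nat \<Rightarrow> nat set) \<Rightarrow> real" where
  "htilde m p r h j = phis m p j (hj m p r h j)"

text \<open>Contraction f *_b^a g for f of k arguments and g of l arguments. The result is a function
  of (b-a)+(k-b)+(l-b) arguments u = (x_1..x_{b-a}, y_1..y_{k-b}, z_1..z_{l-b});
  f is evaluated at (w,x,y) and g at (w,x,z).\<close>
definition contr :: "nat \<Rightarrow> real \<Rightarrow> nat \<Rightarrow> nat \<Rightarrow> nat \<Rightarrow> nat
     \<Rightarrow> ((nat \<Rightarrow> nat set) \<Rightarrow> real) \<Rightarrow> ((nat \<Rightarrow> nat set) \<Rightarrow> real) \<Rightarrow> (nat \<Rightarrow> nat set) \<Rightarrow> real" where
  "contr m p k l a b f g u =
     (\<Sum>w\<in>tuples m a. weight m p a w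
        * f (restrict (app a w u) {..<k})
        * g (restrict (app a w (app (b - a) u (sh (k - a) u))) {..<l}))"

end

theory Submission
  imports Defs "HOL-Analysis.L2_Norm"
begin


definition Eint :: "nat \<Rightarrow> real \<Rightarrow> nat \<Rightarrow> ((nat \<Rightarrow> nat set) \<Rightarrow> real) \<Rightarrow> (nat \<Rightarrow> nat set) \<Rightarrow> real" where
  "Eint m p k F x = (\<Sum>z\<in>cube m. mu m p z * F (x(k:=z)))"

lemma Phi_eq: "Phi m p k F x = F x - Eint m p k F x"
  by (simp add: Phi_def Eint_def)

lemma finite_cube[simp]: "finite (cube m)"
  by (simp add: cube_def)

lemma finite_tuples[simp]: "finite (tuples m k)"
  by (simp add: tuples_def finite_PiE)

lemma mu_nonneg: "0 \<le> p \<Longrightarrow> p \<le> 1 \<Longrightarrow> 0 \<le> mu m p z"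
  by (simp add: mu_def)

lemma weight_nonneg: "0 \<le> p \<Longrightarrow> p \<le> 1 \<Longrightarrow> 0 \<le> weight m p k x"
  by (simp add: weight_def mu_nonneg prod_nonneg)

lemma sum_mu: "(\<Sum>z\<in>cube m. mu m p z) = 1"
proof (induction m)
  case 0
  then show ?case by (simp add: cube_def mu_def)
next
  case (Suc m)
  have P: "Pow {..<Suc m} = Pow {..<m} \<union> insert m ` Pow {..<m}"
    by (simp add: lessThan_Suc Pow_insert)
  have disj: "Pow {..<m} \<inter> insert m ` Pow {..<m} = {}" by auto
  have inj: "inj_on (insert m) (Pow {..<m})"
  proof (rule inj_onI)
    fix x y assume "x \<in> Pow {..<m}" "y \<in> Pow {..<m}" "insert m x = insert m y"
    then have "m \<notin> x" "m \<notin> y" by auto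
    then show "x = y" using \<open>insert m x = insert m y\<close> by (metis insert_ident)
  qed
  have c1: "x \<in> Pow {..<m} \<Longrightarrow> card x \<le> m" for x
    by (metis PowD card_lessThan card_mono finite_lessThan)
  have A: "(\<Sum>z\<in>Pow {..<m}. mu (Suc m) p z) = (1 - p) * (\<Sum>z\<in>Pow {..<m}. mu m p z)"
    unfolding sum_distrib_left
    by (rule sum.cong) (auto simp: mu_def c1 Suc_diff_le)
  have B: "(\<Sum>z\<in>insert m ` Pow {..<m}. mu (Suc m) p z) = p * (\<Sum>z\<in>Pow {..<m}. mu m p z)"
    unfolding sum.reindex[OF inj] sum_distrib_left
  proof (rule sum.cong)
    fix x assume x: "x \<in> Pow {..<m}"
    then have "m \<notin> x" "finite x" by (auto intro: finite_subset)
    then show "(mu (Suc m) p \<circ> insert m) x = p * mu m p x"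
      using c1[OF x] by (simp add: mu_def)
  qed simp
  show ?case
    using Suc unfolding cube_def P
    by (subst sum.union_disjoint) (auto simp: A B disj cube_def)
qed



lemma Phi_fun: "Phi m p k F = (\<lambda>x. F x - Eint m p k F x)"
  by (simp add: fun_eq_iff Phi_eq)

lemma Eint_upd_same: "Eint m p k F (x(k:=z)) = Eint m p k F x"
  by (simp add: Eint_def)

lemma Eint_idem: "Eint m p k (Eint m p k F) x = Eint m p k F x"
proof -
  have "Eint m p k (Eint m p k F) x = (\<Sum>z\<in>cube m. mu m p z * Eint m p k F x)"
    unfolding Eint_def[of m p k "Eint m p k F"] by (simp add: Eint_upd_same)
  also have "\<dots> = Eint m p k F x" by (simp add: sum_distrib_right[symmetric] sum_mu)
  finally show ?thesis .
qed

lemma Eint_comm: "a \<noteq> b \<Longrightarrow> Eint m p a (Eint m p b F) x = Eint m p b (Eint m p a F) x"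
  unfolding Eint_def sum_distrib_left
  by (subst sum.swap) (simp add: fun_upd_twist mult.left_commute)

lemma Eint_diff: "Eint m p k (\<lambda>x. F x - G x) x = Eint m p k F x - Eint m p k G x"
  by (simp add: Eint_def algebra_simps sum_subtractf)

lemma Eint_zero: "Eint m p k (\<lambda>_. 0) x = 0"
  by (simp add: Eint_def)

lemma Eint_sum: "Eint m p k (\<lambda>x. \<Sum>w\<in>W. f w x) x = (\<Sum>w\<in>W. Eint m p k (f w) x)"
  unfolding Eint_def sum_distrib_left by (rule sum.swap)

lemma Eint_cmult: "Eint m p k (\<lambda>x. c * F x) x = c * Eint m p k F x"
  unfolding Eint_def sum_distrib_left by (simp add: algebra_simps)

lemma Eint_mult_indep: "(\<And>z. G (x(k:=z)) = G x) \<Longrightarrow> Eint m p k (\<lambda>x. F x * G x) x = Eint m p k F x * G x"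
  unfolding Eint_def sum_distrib_right by (simp add: algebra_simps)

lemma Eint_const: "Eint m p k (\<lambda>_. c) x = c"
  unfolding Eint_def by (simp add: sum_distrib_right[symmetric] sum_mu)

lemma variance_id:
  fixes a f :: "'a \<Rightarrow> real"
  assumes "finite Z" "(\<Sum>z\<in>Z. a z) = 1"
  shows "(\<Sum>z\<in>Z. a z * (f z - (\<Sum>z\<in>Z. a z * f z))^2) = (\<Sum>z\<in>Z. a z * (f z)^2) - (\<Sum>z\<in>Z. a z * f z)^2"
proof -
  define M where "M = (\<Sum>z\<in>Z. a z * f z)"
  have "(\<Sum>z\<in>Z. a z * (f z - M)^2) = (\<Sum>z\<in>Z. a z * (f z)^2) - 2 * M * (\<Sum>z\<in>Z. a z * f z) + M^2 * (\<Sum>z\<in>Z. a z)"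
    by (simp add: power2_diff algebra_simps sum.distrib sum_subtractf sum_distrib_left sum_distrib_right)
  then show ?thesis using assms by (simp add: M_def power2_eq_square)
qed

lemma Eint_variance: "Eint m p k (\<lambda>y. (F y - Eint m p k F x)^2) x = Eint m p k (\<lambda>y. (F y)^2) x - (Eint m p k F x)^2"
  unfolding Eint_def by (rule variance_id) (simp_all add: sum_mu)

lemma Eint_nonneg: "0 \<le> p \<Longrightarrow> p \<le> 1 \<Longrightarrow> (\<And>z. 0 \<le> F (x(k:=z))) \<Longrightarrow> 0 \<le> Eint m p k F x"
  unfolding Eint_def by (intro sum_nonneg mult_nonneg_nonneg mu_nonneg) auto

lemma Eint_mono: "0 \<le> p \<Longrightarrow> p \<le> 1 \<Longrightarrow> (\<And>z. F (x(k:=z)) \<le> G (x(k:=z))) \<Longrightarrow> Eint m p k F x \<le> Eint m p k G x"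
  unfolding Eint_def by (intro sum_mono mult_left_mono mu_nonneg) auto

lemma Eint_jensen: "0 \<le> p \<Longrightarrow> p \<le> 1 \<Longrightarrow> (Eint m p k F x)^2 \<le> Eint m p k (\<lambda>y. (F y)^2) x"
  using Eint_variance[of m p k F x] Eint_nonneg[where m=m and p=p and k=k and F="\<lambda>y. (F y - Eint m p k F x)^2" and x=x]
  by simp

lemma phis_Suc_apply: "phis m p (Suc t) F x = phis m p t F x - Eint m p t (phis m p t F) x"
  by (simp add: Phi_eq)

lemma Eint_phis_comm: "t \<le> k \<Longrightarrow> Eint m p k (phis m p t F) = phis m p t (Eint m p k F)"
proof (induction t)
  case 0 then show ?case by simp
next
  case (Suc t)
  then have IH: "Eint m p k (phis m p t F) = phis m p t (Eint m p k F)" and ne: "k \<noteq> t" by auto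
  show ?case
  proof
    fix x
    have "Eint m p k (phis m p (Suc t) F) x = Eint m p k (phis m p t F) x - Eint m p k (Eint m p t (phis m p t F)) x"
      by (simp add: Phi_fun Eint_diff[where F="phis m p t F", symmetric])
    also have "\<dots> = phis m p t (Eint m p k F) x - Eint m p t (Eint m p k (phis m p t F)) x"
      using IH Eint_comm[OF ne, of m p "phis m p t F" x] by simp
    also have "\<dots> = phis m p (Suc t) (Eint m p k F) x"
      using IH by (simp add: Phi_eq)
    finally show "Eint m p k (phis m p (Suc t) F) x = phis m p (Suc t) (Eint m p k F) x" .
  qed
qed

lemma Eint_phis_degen: "k < t \<Longrightarrow> Eint m p k (phis m p t F) x = 0"
proof (induction t arbitrary: x)
  case 0 then show ?case by simp
next
  case (Suc t)
  have "Eint m p k (phis m p (Suc t) F) x = Eint m p k (phis m p t F) x - Eint m p k (Eint m p t (phis m p t F)) x"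
    by (simp add: Phi_fun Eint_diff[where F="phis m p t F", symmetric])
  also have "\<dots> = 0"
  proof (cases "k = t")
    case True then show ?thesis by (simp add: Eint_idem)
  next
    case False
    then have kt: "k < t" using Suc by simp
    have "Eint m p k (phis m p t F) = (\<lambda>_. 0)" using Suc.IH[OF kt] by auto
    then show ?thesis using Eint_comm[OF False, of m p "phis m p t F" x] Suc.IH[OF kt] by (simp add: Eint_zero)
  qed
  finally show ?case .
qed



definition ins :: "nat \<Rightarrow> nat \<Rightarrow> nat set \<Rightarrow> (nat \<Rightarrow> nat set) \<Rightarrow> nat \<Rightarrow> nat set" where
  "ins q k z y = restrict (\<lambda>i. if i < k then y i else if i = k then z else y (i - 1)) {..<Suc q}"

definition del :: "nat \<Rightarrow> (nat \<Rightarrow> 'a) \<Rightarrow> nat \<Rightarrow> 'a" where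
  "del k x = (\<lambda>i. if i < k then x i else x (Suc i))"

lemma tuples_iff: "v \<in> tuples m k \<longleftrightarrow> (\<forall>i<k. v i \<in> cube m) \<and> (\<forall>i. k \<le> i \<longrightarrow> v i = undefined)"
  by (auto simp: tuples_def PiE_iff extensional_def not_less)

lemma ins_bij:
  assumes "k \<le> q"
  shows "bij_betw (\<lambda>(z,y). ins q k z y) (cube m \<times> tuples m q) (tuples m (Suc q))"
proof (rule bij_betw_byWitness[where f' = "\<lambda>v. (v k, restrict (del k v) {..<q})"])
  show "\<forall>a\<in>cube m \<times> tuples m q. (\<lambda>v. (v k, restrict (del k v) {..<q})) ((\<lambda>(z, y). ins q k z y) a) = a"
    using assms by (auto simp: ins_def del_def tuples_iff fun_eq_iff)
  show "\<forall>a'\<in>tuples m (Suc q). (\<lambda>(z, y). ins q k z y) ((\<lambda>v. (v k, restrict (del k v) {..<q})) a') = a'"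
    using assms by (auto simp: ins_def del_def tuples_iff fun_eq_iff)
  show "(\<lambda>(z, y). ins q k z y) ` (cube m \<times> tuples m q) \<subseteq> tuples m (Suc q)"
    using assms by (auto simp: ins_def tuples_iff)
  show "(\<lambda>v. (v k, restrict (del k v) {..<q})) ` tuples m (Suc q) \<subseteq> cube m \<times> tuples m q"
    using assms by (auto simp: del_def tuples_iff)
qed

lemma weight_ins:
  assumes "k \<le> q" "y \<in> tuples m q"
  shows "weight m p (Suc q) (ins q k z y) = mu m p z * weight m p q y"
proof -
  define s where "s = (\<lambda>i::nat. if i < k then i else Suc i)"
  have inj: "inj_on s {..<q}" by (auto simp: s_def inj_on_def split: if_splits)
  have img: "s ` {..<q} = {..<Suc q} - {k}"
  proof
    show "s ` {..<q} \<subseteq> {..<Suc q} - {k}" by (auto simp: s_def)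
    show "{..<Suc q} - {k} \<subseteq> s ` {..<q}"
    proof
      fix i assume i: "i \<in> {..<Suc q} - {k}"
      show "i \<in> s ` {..<q}"
      proof (cases "i < k")
        case True then show ?thesis using i assms by (auto simp: s_def intro!: image_eqI[where x=i])
      next
        case False then show ?thesis using i by (auto simp: s_def intro!: image_eqI[where x="i - 1"])
      qed
    qed
  qed
  have "weight m p (Suc q) (ins q k z y) = mu m p (ins q k z y k) * (\<Prod>i\<in>{..<Suc q} - {k}. mu m p (ins q k z y i))"
    unfolding weight_def using assms by (subst prod.remove[of _ k]) auto
  also have "(\<Prod>i\<in>{..<Suc q} - {k}. mu m p (ins q k z y i)) = (\<Prod>i\<in>{..<q}. mu m p (ins q k z y (s i)))"
    unfolding img[symmetric] by (simp add: prod.reindex[OF inj])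
  also have "\<dots> = weight m p q y"
    unfolding weight_def by (rule prod.cong) (auto simp: s_def ins_def)
  moreover have "ins q k z y k = z" using assms by (simp add: ins_def)
  ultimately show ?thesis by simp
qed

lemma sum_ins:
  assumes "k \<le> q"
  shows "(\<Sum>v\<in>tuples m (Suc q). weight m p (Suc q) v * F v)
       = (\<Sum>z\<in>cube m. \<Sum>y\<in>tuples m q. mu m p z * weight m p q y * F (ins q k z y))"
proof -
  have "(\<Sum>v\<in>tuples m (Suc q). weight m p (Suc q) v * F v)
      = (\<Sum>zy\<in>cube m \<times> tuples m q. weight m p (Suc q) ((\<lambda>(z,y). ins q k z y) zy) * F ((\<lambda>(z,y). ins q k z y) zy))"
    by (rule sum.reindex_bij_betw[OF ins_bij[OF assms], symmetric])
  also have "\<dots> = (\<Sum>zy\<in>cube m \<times> tuples m q. mu m p (fst zy) * weight m p q (snd zy) * F (ins q k (fst zy) (snd zy)))"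
    by (rule sum.cong) (auto simp: weight_ins[OF assms])
  also have "\<dots> = (\<Sum>z\<in>cube m. \<Sum>y\<in>tuples m q. mu m p z * weight m p q y * F (ins q k z y))"
    by (simp add: sum.cartesian_product case_prod_beta)
  finally show ?thesis .
qed

lemma ins_upd: "k \<le> q \<Longrightarrow> (ins q k z y)(k := z') = ins q k z' y"
  by (auto simp: ins_def fun_eq_iff)

lemma sum_Eint:
  assumes "k < n"
  shows "(\<Sum>v\<in>tuples m n. weight m p n v * Eint m p k G v) = (\<Sum>v\<in>tuples m n. weight m p n v * G v)"
proof -
  obtain q where n: "n = Suc q" using assms by (cases n) auto
  have kq: "k \<le> q" using assms n by simp
  have "(\<Sum>v\<in>tuples m n. weight m p n v * Eint m p k G v)
     = (\<Sum>z\<in>cube m. \<Sum>y\<in>tuples m q. mu m p z * weight m p q y * Eint m p k G (ins q k z y))"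
    unfolding n by (rule sum_ins[OF kq])
  also have "\<dots> = (\<Sum>z\<in>cube m. mu m p z * (\<Sum>y\<in>tuples m q. \<Sum>z'\<in>cube m. mu m p z' * weight m p q y * G (ins q k z' y)))"
    unfolding Eint_def by (simp add: ins_upd[OF kq] sum_distrib_left mult.assoc mult.left_commute)
  also have "\<dots> = (\<Sum>y\<in>tuples m q. \<Sum>z'\<in>cube m. mu m p z' * weight m p q y * G (ins q k z' y))"
    by (simp add: sum_distrib_right[symmetric] sum_mu)
  also have "\<dots> = (\<Sum>v\<in>tuples m n. weight m p n v * G v)"
    unfolding n sum_ins[OF kq] by (rule sum.swap)
  finally show ?thesis .
qed

lemma Eint_cong_upd: "(\<And>z. F (x(k:=z)) = G (x(k:=z))) \<Longrightarrow> Eint m p k F x = Eint m p k G x"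
  unfolding Eint_def by simp

lemma Eint_mult_indep2: "(\<And>z. G (x(k:=z)) = G x) \<Longrightarrow> Eint m p k (\<lambda>x. G x * F x) x = G x * Eint m p k F x"
  unfolding Eint_def sum_distrib_left by (simp add: algebra_simps)

lemma upd_tuples: "v \<in> tuples m n \<Longrightarrow> k < n \<Longrightarrow> z \<in> cube m \<Longrightarrow> v(k:=z) \<in> tuples m n"
  by (auto simp: tuples_iff)

lemma L2_Phi:
  assumes "k < n" "0 \<le> p" "p \<le> 1"
  shows "(\<Sum>v\<in>tuples m n. weight m p n v * (Phi m p k F v)^2) \<le> (\<Sum>v\<in>tuples m n. weight m p n v * (F v)^2)"
proof -
  have "(\<Sum>v\<in>tuples m n. weight m p n v * (Phi m p k F v)^2)
     = (\<Sum>v\<in>tuples m n. weight m p n v * Eint m p k (\<lambda>y. (Phi m p k F y)^2) v)"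
    by (rule sum_Eint[OF assms(1), symmetric])
  also have "\<dots> \<le> (\<Sum>v\<in>tuples m n. weight m p n v * Eint m p k (\<lambda>y. (F y)^2) v)"
  proof (rule sum_mono, rule mult_left_mono)
    fix v
    have "Eint m p k (\<lambda>y. (Phi m p k F y)^2) v = Eint m p k (\<lambda>y. (F y - Eint m p k F v)^2) v"
      by (rule Eint_cong_upd) (simp add: Phi_eq Eint_upd_same)
    also have "\<dots> \<le> Eint m p k (\<lambda>y. (F y)^2) v"
      by (simp add: Eint_variance)
    finally show "Eint m p k (\<lambda>y. (Phi m p k F y)^2) v \<le> Eint m p k (\<lambda>y. (F y)^2) v" .
  qed (simp add: weight_nonneg assms)
  also have "\<dots> = (\<Sum>v\<in>tuples m n. weight m p n v * (F v)^2)"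
    by (rule sum_Eint[OF assms(1)])
  finally show ?thesis .
qed

lemma L2_phis:
  assumes "t \<le> n" "0 \<le> p" "p \<le> 1"
  shows "(\<Sum>v\<in>tuples m n. weight m p n v * (phis m p t F v)^2) \<le> (\<Sum>v\<in>tuples m n. weight m p n v * (F v)^2)"
  using assms(1)
proof (induction t)
  case 0 then show ?case by simp
next
  case (Suc t)
  then show ?case using L2_Phi[of t n p m "phis m p t F"] assms by simp
qed

lemma selfadj:
  assumes "k < n"
  shows "(\<Sum>v\<in>tuples m n. weight m p n v * (Eint m p k A v * B v)) = (\<Sum>v\<in>tuples m n. weight m p n v * (A v * Eint m p k B v))"
proof -
  have "(\<Sum>v\<in>tuples m n. weight m p n v * (Eint m p k A v * B v)) = (\<Sum>v\<in>tuples m n. weight m p n v * Eint m p k (\<lambda>v. Eint m p k A v * B v) v)"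
    by (rule sum_Eint[OF assms, symmetric])
  also have "\<dots> = (\<Sum>v\<in>tuples m n. weight m p n v * (Eint m p k A v * Eint m p k B v))"
    by (simp add: Eint_mult_indep2 Eint_upd_same)
  also have "\<dots> = (\<Sum>v\<in>tuples m n. weight m p n v * Eint m p k (\<lambda>v. A v * Eint m p k B v) v)"
    by (simp add: Eint_mult_indep Eint_upd_same)
  also have "\<dots> = (\<Sum>v\<in>tuples m n. weight m p n v * (A v * Eint m p k B v))"
    by (rule sum_Eint[OF assms])
  finally show ?thesis .
qed

lemma del_ins: "k \<le> q \<Longrightarrow> y \<in> tuples m q \<Longrightarrow> del k (ins q k z y) = y"
  by (auto simp: del_def ins_def tuples_iff fun_eq_iff)

lemma sum_del:
  assumes "k \<le> q"
  shows "(\<Sum>v\<in>tuples m (Suc q). weight m p (Suc q) v * F (del k v)) = (\<Sum>y\<in>tuples m q. weight m p q y * F y)"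
proof -
  have "(\<Sum>v\<in>tuples m (Suc q). weight m p (Suc q) v * F (del k v))
     = (\<Sum>z\<in>cube m. \<Sum>y\<in>tuples m q. mu m p z * weight m p q y * F (del k (ins q k z y)))"
    by (rule sum_ins[OF assms])
  also have "\<dots> = (\<Sum>z\<in>cube m. mu m p z * (\<Sum>y\<in>tuples m q. weight m p q y * F y))"
    by (simp add: del_ins[OF assms] sum_distrib_left mult.assoc)
  also have "\<dots> = (\<Sum>y\<in>tuples m q. weight m p q y * F y)"
    by (simp add: sum_distrib_right[symmetric] sum_mu)
  finally show ?thesis .
qed



definition join :: "nat \<Rightarrow> nat \<Rightarrow> (nat \<Rightarrow> nat set) \<Rightarrow> (nat \<Rightarrow> nat set) \<Rightarrow> nat \<Rightarrow> nat set" where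
  "join a c w u = restrict (app a w u) {..<a+c}"

lemma join_apply: "join a c w u i = (if i < a then w i else if i < a + c then u (i - a) else undefined)"
  by (simp add: join_def app_def)

lemma join_tuples: "w \<in> tuples m a \<Longrightarrow> u \<in> tuples m c \<Longrightarrow> join a c w u \<in> tuples m (a+c)"
  by (auto simp: tuples_iff join_apply)

lemma join_upd_left: "k < a \<Longrightarrow> (join a c w u)(k:=z) = join a c (w(k:=z)) u"
  by (auto simp: fun_eq_iff join_apply)

lemma join_upd_right: "k < c \<Longrightarrow> (join a c w u)(a+k:=z) = join a c w (u(k:=z))"
  by (auto simp: fun_eq_iff join_apply)

lemma join_cong: "(\<And>i. i < a \<Longrightarrow> w i = w' i) \<Longrightarrow> (\<And>i. i < c \<Longrightarrow> u i = u' i) \<Longrightarrow> join a c w u = join a c w' u'"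
  by (auto simp: fun_eq_iff join_apply)

lemma tuples_0: "tuples m 0 = {\<lambda>_. undefined}"
  by (simp add: tuples_def)

lemma weight_0: "weight m p 0 x = 1"
  by (simp add: weight_def)

lemma ins_join: "ins (a+b) (a+b) z (join a b w y) = join a (Suc b) w (ins b b z y)"
  by (auto simp: fun_eq_iff join_apply ins_def)

lemma sum_split:
  "(\<Sum>v\<in>tuples m (a+b). weight m p (a+b) v * F v)
   = (\<Sum>w\<in>tuples m a. \<Sum>y\<in>tuples m b. weight m p a w * weight m p b y * F (join a b w y))"
proof (induction b arbitrary: F)
  case 0
  have "w \<in> tuples m a \<Longrightarrow> join a 0 w (\<lambda>_. undefined) = w" for w
    by (auto simp: fun_eq_iff join_apply tuples_iff not_less)
  then show ?case by (simp add: tuples_0 weight_0)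
next
  case (Suc b)
  have "(\<Sum>v\<in>tuples m (a + Suc b). weight m p (a + Suc b) v * F v)
      = (\<Sum>z\<in>cube m. \<Sum>y\<in>tuples m (a+b). mu m p z * weight m p (a+b) y * F (ins (a+b) (a+b) z y))"
    using sum_ins[of "a+b" "a+b" m p F] by simp
  also have "\<dots> = (\<Sum>z\<in>cube m. mu m p z * (\<Sum>y\<in>tuples m (a+b). weight m p (a+b) y * F (ins (a+b) (a+b) z y)))"
    by (simp add: sum_distrib_left mult.assoc)
  also have "\<dots> = (\<Sum>z\<in>cube m. mu m p z * (\<Sum>w\<in>tuples m a. \<Sum>y\<in>tuples m b. weight m p a w * weight m p b y * F (join a (Suc b) w (ins b b z y))))"
    by (simp add: Suc.IH ins_join)
  also have "\<dots> = (\<Sum>z\<in>cube m. \<Sum>w\<in>tuples m a. weight m p a w * (\<Sum>y\<in>tuples m b. mu m p z * weight m p b y * F (join a (Suc b) w (ins b b z y))))"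
    by (simp add: sum_distrib_left mult_ac)
  also have "\<dots> = (\<Sum>w\<in>tuples m a. \<Sum>z\<in>cube m. weight m p a w * (\<Sum>y\<in>tuples m b. mu m p z * weight m p b y * F (join a (Suc b) w (ins b b z y))))"
    by (rule sum.swap)
  also have "\<dots> = (\<Sum>w\<in>tuples m a. weight m p a w * (\<Sum>z\<in>cube m. \<Sum>y\<in>tuples m b. mu m p z * weight m p b y * F (join a (Suc b) w (ins b b z y))))"
    by (simp add: sum_distrib_left)
  also have "\<dots> = (\<Sum>w\<in>tuples m a. weight m p a w * (\<Sum>y\<in>tuples m (Suc b). weight m p (Suc b) y * F (join a (Suc b) w y)))"
    by (simp add: sum_ins[of b b m p])
  also have "\<dots> = (\<Sum>w\<in>tuples m a. \<Sum>y\<in>tuples m (Suc b). weight m p a w * weight m p (Suc b) y * F (join a (Suc b) w y))"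
    by (simp add: sum_distrib_left mult.assoc)
  finally show ?case .
qed



definition Ncl :: "nat \<Rightarrow> real \<Rightarrow> nat \<Rightarrow> nat \<Rightarrow> ((nat \<Rightarrow> nat set) \<Rightarrow> real) \<Rightarrow> (nat \<Rightarrow> nat set) \<Rightarrow> real" where
  "Ncl m p a c Q u = (\<Sum>w\<in>tuples m a. weight m p a w * (Q (join a c w u))^2)"

lemma Ncl_nonneg: "0 \<le> p \<Longrightarrow> p \<le> 1 \<Longrightarrow> 0 \<le> Ncl m p a c Q u"
  unfolding Ncl_def by (intro sum_nonneg mult_nonneg_nonneg weight_nonneg) auto

lemma intk_nonneg: "0 \<le> p \<Longrightarrow> p \<le> 1 \<Longrightarrow> (\<And>x. 0 \<le> f x) \<Longrightarrow> 0 \<le> intk m p k f"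
  unfolding intk_def by (intro sum_nonneg mult_nonneg_nonneg weight_nonneg) auto

lemma intk_mono: "0 \<le> p \<Longrightarrow> p \<le> 1 \<Longrightarrow> (\<And>x. x \<in> tuples m k \<Longrightarrow> f x \<le> g x) \<Longrightarrow> intk m p k f \<le> intk m p k g"
  unfolding intk_def by (intro sum_mono mult_left_mono weight_nonneg) auto

lemma Phi_join_left: "k < a \<Longrightarrow> Phi m p k Q (join a c w u) = Phi m p k (\<lambda>w. Q (join a c w u)) w"
  by (simp add: Phi_eq Eint_def join_upd_left)

lemma Phi_join_right: "k < c \<Longrightarrow> Phi m p (a + k) Q (join a c w u) = Phi m p k (\<lambda>u. Q (join a c w u)) u"
  by (simp add: Phi_eq Eint_def join_upd_right)

lemma sq_diff_le: "((x::real) - y)^2 \<le> 2 * x^2 + 2 * y^2"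
proof -
  have "0 \<le> (x+y)^2" by simp
  moreover have "2*x^2+2*y^2 - (x-y)^2 = (x+y)^2" by (simp add: power2_eq_square algebra_simps)
  ultimately show ?thesis by linarith
qed

lemma N_step:
  assumes p: "0 \<le> p" "p \<le> 1" and k: "k < a + c"
  shows "intk m p c (\<lambda>u. (Ncl m p a c (Phi m p k Q) u)^2) \<le> 16 * intk m p c (\<lambda>u. (Ncl m p a c Q u)^2)"
proof (cases "k < a")
  case True
  have "intk m p c (\<lambda>u. (Ncl m p a c (Phi m p k Q) u)^2) \<le> intk m p c (\<lambda>u. (Ncl m p a c Q u)^2)"
  proof (rule intk_mono[OF p])
    fix u
    have "Ncl m p a c (Phi m p k Q) u \<le> Ncl m p a c Q u"
      unfolding Ncl_def Phi_join_left[OF True] by (rule L2_Phi[OF True p])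
    then show "(Ncl m p a c (Phi m p k Q) u)^2 \<le> (Ncl m p a c Q u)^2"
      using Ncl_nonneg[OF p] by (simp add: power_mono)
  qed
  also have "\<dots> \<le> 16 * intk m p c (\<lambda>u. (Ncl m p a c Q u)^2)"
    using intk_nonneg[OF p, of "\<lambda>u. (Ncl m p a c Q u)^2" m c] by simp
  finally show ?thesis .
next
  case False
  define k' where "k' = k - a"
  have kk: "k = a + k'" "k' < c" using False k by (auto simp: k'_def)
  define N where "N = Ncl m p a c Q"
  have pt: "Ncl m p a c (Phi m p k Q) u \<le> 2 * N u + 2 * Eint m p k' N u" for u
  proof -
    have "Ncl m p a c (Phi m p k Q) u = (\<Sum>w\<in>tuples m a. weight m p a w * (Q (join a c w u) - Eint m p k' (\<lambda>u. Q (join a c w u)) u)^2)"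
      unfolding Ncl_def kk(1) Phi_join_right[OF kk(2)] by (simp add: Phi_eq)
    also have "\<dots> \<le> (\<Sum>w\<in>tuples m a. weight m p a w * (2 * (Q (join a c w u))^2 + 2 * Eint m p k' (\<lambda>u. (Q (join a c w u))^2) u))"
    proof (rule sum_mono, rule mult_left_mono)
      fix w
      show "(Q (join a c w u) - Eint m p k' (\<lambda>u. Q (join a c w u)) u)^2 \<le> 2 * (Q (join a c w u))^2 + 2 * Eint m p k' (\<lambda>u. (Q (join a c w u))^2) u"
        using sq_diff_le[of "Q (join a c w u)" "Eint m p k' (\<lambda>u. Q (join a c w u)) u"]
          Eint_jensen[OF p, of m k' "\<lambda>u. Q (join a c w u)" u] by linarith
    qed (simp add: weight_nonneg p)
    also have "\<dots> = 2 * N u + 2 * Eint m p k' N u"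
      unfolding N_def Ncl_def Eint_sum Eint_cmult
      by (simp add: sum.distrib sum_distrib_left algebra_simps)
    finally show ?thesis .
  qed
  have "intk m p c (\<lambda>u. (Ncl m p a c (Phi m p k Q) u)^2) \<le> intk m p c (\<lambda>u. 8 * (N u)^2 + 8 * Eint m p k' (\<lambda>u. (N u)^2) u)"
  proof (rule intk_mono[OF p])
    fix u
    have n0: "0 \<le> Ncl m p a c (Phi m p k Q) u" by (rule Ncl_nonneg[OF p])
    have "(Ncl m p a c (Phi m p k Q) u)^2 \<le> (2 * N u + 2 * Eint m p k' N u)^2"
      using pt[of u] n0 by (simp add: power_mono)
    also have "\<dots> \<le> 8 * (N u)^2 + 8 * (Eint m p k' N u)^2"
      using sq_diff_le[of "2 * N u" "- 2 * Eint m p k' N u"] by (simp add: power2_eq_square algebra_simps)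
    also have "\<dots> \<le> 8 * (N u)^2 + 8 * Eint m p k' (\<lambda>u. (N u)^2) u"
      using Eint_jensen[OF p, of m k' N u] by simp
    finally show "(Ncl m p a c (Phi m p k Q) u)^2 \<le> 8 * (N u)^2 + 8 * Eint m p k' (\<lambda>u. (N u)^2) u" .
  qed
  also have "\<dots> = 8 * intk m p c (\<lambda>u. (N u)^2) + 8 * (\<Sum>u\<in>tuples m c. weight m p c u * Eint m p k' (\<lambda>u. (N u)^2) u)"
    unfolding intk_def by (simp add: sum.distrib sum_distrib_left algebra_simps)
  also have "\<dots> = 16 * intk m p c (\<lambda>u. (Ncl m p a c Q u)^2)"
    unfolding sum_Eint[OF kk(2)] by (simp add: intk_def N_def)
  finally show ?thesis .
qed

lemma N_phis:
  assumes p: "0 \<le> p" "p \<le> 1" and t: "t \<le> a + c"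
  shows "intk m p c (\<lambda>u. (Ncl m p a c (phis m p t Q) u)^2) \<le> 16^t * intk m p c (\<lambda>u. (Ncl m p a c Q u)^2)"
  using t
proof (induction t)
  case 0 then show ?case by simp
next
  case (Suc t)
  have "intk m p c (\<lambda>u. (Ncl m p a c (phis m p (Suc t) Q) u)^2) \<le> 16 * intk m p c (\<lambda>u. (Ncl m p a c (phis m p t Q) u)^2)"
    using N_step[OF p, of t a c m "phis m p t Q"] Suc.prems by simp
  also have "\<dots> \<le> 16 * (16^t * intk m p c (\<lambda>u. (Ncl m p a c Q u)^2))"
    using Suc by simp
  finally show ?case by simp
qed



definition Gam :: "nat \<Rightarrow> real \<Rightarrow> nat \<Rightarrow> nat \<Rightarrow> ((nat \<Rightarrow> nat set) \<Rightarrow> real) \<Rightarrow> (nat \<Rightarrow> nat set) \<Rightarrow> real" where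
  "Gam m p a c Q v = (\<Sum>w\<in>tuples m a. weight m p a w * Q (join a c w v) * Q (join a c w (sh c v)))"

lemma sh_upd_low: "k < c \<Longrightarrow> sh c (v(k:=z)) = sh c v"
  by (auto simp: sh_def fun_eq_iff)

lemma sh_upd_high: "sh c (v(k+c:=z)) = (sh c v)(k:=z)"
  by (auto simp: sh_def fun_eq_iff)

lemma join_upd_high: "c \<le> k \<Longrightarrow> join a c w (v(k:=z)) = join a c w v"
  by (rule join_cong) auto

lemma Gam_u_step:
  assumes kc: "k < c"
  shows "Gam m p a c (Phi m p (a+k) Q) v = Phi m p k (Phi m p (k+c) (Gam m p a c Q)) v"
proof -
  define A where "A = (\<lambda>w v. Q (join a c w v))"
  define B where "B = (\<lambda>w v. Q (join a c w (sh c v)))"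
  have Aind: "A w (v(k+c:=z)) = A w v" for w v z
    unfolding A_def by (simp add: join_upd_high)
  have Bind: "B w (v(k:=z)) = B w v" for w v z
    unfolding B_def by (simp add: sh_upd_low[OF kc])
  have PB: "Phi m p (k+c) (B w) (v(k:=z)) = Phi m p (k+c) (B w) v" for w v z
  proof -
    have "k \<noteq> k + c" using kc by simp
    then have "v(k:=z, k+c:=z') = v(k+c:=z', k:=z)" for z' by (simp add: fun_upd_twist)
    then show ?thesis by (simp add: Phi_eq Eint_def Bind)
  qed
  have L1: "Phi m p (a+k) Q (join a c w v) = Phi m p k (A w) v" for w v
    unfolding A_def by (rule Phi_join_right[OF kc])
  have L2: "Phi m p (a+k) Q (join a c w (sh c v)) = Phi m p (k+c) (B w) v" for w v
    unfolding Phi_join_right[OF kc] B_def by (simp add: Phi_eq Eint_def sh_upd_high)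
  have G: "Gam m p a c Q = (\<lambda>v. \<Sum>w\<in>tuples m a. weight m p a w * A w v * B w v)"
    by (simp add: fun_eq_iff Gam_def A_def B_def)
  have K: "Phi m p (k+c) (Gam m p a c Q) = (\<lambda>v. \<Sum>w\<in>tuples m a. A w v * (weight m p a w * Phi m p (k+c) (B w) v))"
  proof
    fix v
    have "Eint m p (k+c) (Gam m p a c Q) v = (\<Sum>w\<in>tuples m a. (weight m p a w * A w v) * Eint m p (k+c) (B w) v)"
      unfolding G Eint_sum
      by (rule sum.cong[OF refl], rule Eint_mult_indep2) (simp add: Aind)
    then show "Phi m p (k+c) (Gam m p a c Q) v = (\<Sum>w\<in>tuples m a. A w v * (weight m p a w * Phi m p (k+c) (B w) v))"
      unfolding Phi_eq by (simp add: G Phi_eq algebra_simps sum_subtractf)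
  qed
  have EK: "Eint m p k (Phi m p (k+c) (Gam m p a c Q)) v = (\<Sum>w\<in>tuples m a. Eint m p k (A w) v * (weight m p a w * Phi m p (k+c) (B w) v))"
    unfolding K Eint_sum
    by (rule sum.cong[OF refl], rule Eint_mult_indep) (simp add: PB)
  have PK: "Phi m p (k+c) (Gam m p a c Q) v = (\<Sum>w\<in>tuples m a. A w v * (weight m p a w * Phi m p (k+c) (B w) v))"
    using K by simp
  have "Phi m p k (Phi m p (k+c) (Gam m p a c Q)) v = (\<Sum>w\<in>tuples m a. weight m p a w * Phi m p k (A w) v * Phi m p (k+c) (B w) v)"
    unfolding Phi_eq[of m p k "Phi m p (k+c) (Gam m p a c Q)" v] PK EK
    by (simp add: Phi_eq[of m p k] sum_subtractf[symmetric] algebra_simps)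
  also have "\<dots> = Gam m p a c (Phi m p (a+k) Q) v"
    unfolding Gam_def by (rule sum.cong[OF refl]) (simp only: L1[of _ v] L2[of _ v])
  finally show ?thesis by simp
qed

lemma Gam_u_norm:
  assumes p: "0 \<le> p" "p \<le> 1" and kc: "k < c"
  shows "intk m p (2*c) (\<lambda>v. (Gam m p a c (Phi m p (a+k) Q) v)^2) \<le> intk m p (2*c) (\<lambda>v. (Gam m p a c Q v)^2)"
proof -
  have "intk m p (2*c) (\<lambda>v. (Gam m p a c (Phi m p (a+k) Q) v)^2) = intk m p (2*c) (\<lambda>v. (Phi m p k (Phi m p (k+c) (Gam m p a c Q)) v)^2)"
    by (simp add: Gam_u_step[OF kc])
  also have "\<dots> \<le> intk m p (2*c) (\<lambda>v. (Phi m p (k+c) (Gam m p a c Q) v)^2)"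
    unfolding intk_def by (rule L2_Phi) (use kc p in auto)
  also have "\<dots> \<le> intk m p (2*c) (\<lambda>v. (Gam m p a c Q v)^2)"
    unfolding intk_def by (rule L2_Phi) (use kc p in auto)
  finally show ?thesis .
qed

definition QT :: "nat \<Rightarrow> nat \<Rightarrow> ((nat \<Rightarrow> nat set) \<Rightarrow> real) \<Rightarrow> (nat \<Rightarrow> nat set) \<Rightarrow> real" where
  "QT a c Q x = Q (join a c (sh c x) x)"

lemma QT_join: "QT a c Q (join c a y w) = Q (join a c w y)"
  unfolding QT_def by (rule arg_cong[where f=Q], rule join_cong) (auto simp: sh_def join_apply)

lemma Phi_QT: "k < a \<Longrightarrow> QT a c (Phi m p k Q) = Phi m p (c+k) (QT a c Q)"
proof
  fix x assume ka: "k < a"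
  have "join a c (sh c (x(c+k:=z))) (x(c+k:=z)) = (join a c (sh c x) x)(k:=z)" for z
    unfolding join_upd_left[OF ka] by (rule join_cong) (auto simp: sh_def)
  then show "QT a c (Phi m p k Q) x = Phi m p (c+k) (QT a c Q) x"
    by (simp add: QT_def Phi_eq Eint_def)
qed

lemma quad_sum:
  fixes al :: "'b \<Rightarrow> real" and be :: "'a \<Rightarrow> real" and F :: "'b \<Rightarrow> 'a \<Rightarrow> real"
  shows "(\<Sum>y\<in>B. \<Sum>y'\<in>B. be y * be y' * (\<Sum>w\<in>A. al w * F w y * F w y')^2)
       = (\<Sum>w\<in>A. \<Sum>w'\<in>A. al w * al w' * (\<Sum>y\<in>B. be y * F w y * F w' y)^2)"
proof -
  define G where "G = (\<lambda>y y' w w'. al w * al w' * be y * be y' * F w y * F w y' * F w' y * F w' y')"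
  have "(\<Sum>y\<in>B. \<Sum>y'\<in>B. be y * be y' * (\<Sum>w\<in>A. al w * F w y * F w y')^2) = (\<Sum>y\<in>B. \<Sum>y'\<in>B. \<Sum>w\<in>A. \<Sum>w'\<in>A. G y y' w w')"
    by (simp add: G_def power2_eq_square sum_product sum_distrib_left mult_ac)
  also have "\<dots> = (\<Sum>y\<in>B. \<Sum>w\<in>A. \<Sum>y'\<in>B. \<Sum>w'\<in>A. G y y' w w')"
    by (rule sum.cong[OF refl], rule sum.swap)
  also have "\<dots> = (\<Sum>y\<in>B. \<Sum>w\<in>A. \<Sum>w'\<in>A. \<Sum>y'\<in>B. G y y' w w')"
    by (rule sum.cong[OF refl], rule sum.cong[OF refl], rule sum.swap)
  also have "\<dots> = (\<Sum>w\<in>A. \<Sum>y\<in>B. \<Sum>w'\<in>A. \<Sum>y'\<in>B. G y y' w w')"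
    by (rule sum.swap)
  also have "\<dots> = (\<Sum>w\<in>A. \<Sum>w'\<in>A. \<Sum>y\<in>B. \<Sum>y'\<in>B. G y y' w w')"
    by (rule sum.cong[OF refl], rule sum.swap)
  also have "\<dots> = (\<Sum>w\<in>A. \<Sum>w'\<in>A. al w * al w' * (\<Sum>y\<in>B. be y * F w y * F w' y)^2)"
    by (simp add: G_def power2_eq_square sum_product sum_distrib_left mult_ac)
  finally show ?thesis .
qed

lemma Gam_gram:
  "intk m p (2*c) (\<lambda>v. (Gam m p a c Q v)^2) = intk m p (2*a) (\<lambda>v. (Gam m p c a (QT a c Q) v)^2)"
proof -
  have e1: "Gam m p a c Q (join c c y y') = (\<Sum>w\<in>tuples m a. weight m p a w * Q (join a c w y) * Q (join a c w y'))" for y y'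
  proof -
    have "join a c w (join c c y y') = join a c w y" "join a c w (sh c (join c c y y')) = join a c w y'" for w
      by (rule join_cong; auto simp: join_apply sh_def)+
    then show ?thesis by (simp add: Gam_def)
  qed
  have e2: "Gam m p c a (QT a c Q) (join a a w w') = (\<Sum>y\<in>tuples m c. weight m p c y * Q (join a c w y) * Q (join a c w' y))" for w w'
  proof -
    have "join c a y (join a a w w') = join c a y w" "join c a y (sh a (join a a w w')) = join c a y w'" for y
      by (rule join_cong; auto simp: join_apply sh_def)+
    then show ?thesis by (simp add: Gam_def QT_join)
  qed
  have "intk m p (2*c) (\<lambda>v. (Gam m p a c Q v)^2) = (\<Sum>y\<in>tuples m c. \<Sum>y'\<in>tuples m c. weight m p c y * weight m p c y' * (Gam m p a c Q (join c c y y'))^2)"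
    unfolding intk_def mult_2 by (rule sum_split)
  also have "\<dots> = (\<Sum>w\<in>tuples m a. \<Sum>w'\<in>tuples m a. weight m p a w * weight m p a w' * (Gam m p c a (QT a c Q) (join a a w w'))^2)"
    unfolding e1 e2 by (rule quad_sum[where al="weight m p a" and be="weight m p c" and F="\<lambda>w y. Q (join a c w y)"])
  also have "\<dots> = intk m p (2*a) (\<lambda>v. (Gam m p c a (QT a c Q) v)^2)"
    unfolding intk_def mult_2 by (rule sum_split[symmetric])
  finally show ?thesis .
qed

lemma Gam_step:
  assumes p: "0 \<le> p" "p \<le> 1" and k: "k < a + c"
  shows "intk m p (2*c) (\<lambda>v. (Gam m p a c (Phi m p k Q) v)^2) \<le> intk m p (2*c) (\<lambda>v. (Gam m p a c Q v)^2)"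
proof (cases "k < a")
  case True
  have "intk m p (2*c) (\<lambda>v. (Gam m p a c (Phi m p k Q) v)^2) = intk m p (2*a) (\<lambda>v. (Gam m p c a (QT a c (Phi m p k Q)) v)^2)"
    by (rule Gam_gram)
  also have "\<dots> = intk m p (2*a) (\<lambda>v. (Gam m p c a (Phi m p (c+k) (QT a c Q)) v)^2)"
    by (simp only: Phi_QT[OF True])
  also have "\<dots> \<le> intk m p (2*a) (\<lambda>v. (Gam m p c a (QT a c Q) v)^2)"
    by (rule Gam_u_norm[OF p True])
  also have "\<dots> = intk m p (2*c) (\<lambda>v. (Gam m p a c Q v)^2)"
    by (rule Gam_gram[symmetric])
  finally show ?thesis .
next
  case False
  define k' where "k' = k - a"
  have "k = a + k'" "k' < c" using False k by (auto simp: k'_def)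
  then show ?thesis using Gam_u_norm[OF p] by simp
qed

lemma Gam_phis:
  assumes p: "0 \<le> p" "p \<le> 1" and t: "t \<le> a + c"
  shows "intk m p (2*c) (\<lambda>v. (Gam m p a c (phis m p t Q) v)^2) \<le> intk m p (2*c) (\<lambda>v. (Gam m p a c Q v)^2)"
  using t
proof (induction t)
  case 0 then show ?case by simp
next
  case (Suc t)
  then show ?case using Gam_step[OF p, of t a c m "phis m p t Q"] by simp
qed



definition cyc :: "nat \<Rightarrow> nat \<Rightarrow> nat \<Rightarrow> nat" where
  "cyc k n i = (if i < k then i else if i < n - 1 then Suc i else if i = n - 1 then k else i)"

lemma cyc_bij:
  assumes "k < n" "n \<le> r"
  shows "bij_betw (cyc k n) {..<r} {..<r}"
proof (rule bij_betw_byWitness[where f' = "\<lambda>i. if i < k then i else if i = k then n - 1 else if i < n then i - 1 else i"])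
  show "\<forall>a\<in>{..<r}. (\<lambda>i. if i < k then i else if i = k then n - 1 else if i < n then i - 1 else i) (cyc k n a) = a"
    using assms by (auto simp: cyc_def)
  show "\<forall>a'\<in>{..<r}. cyc k n ((\<lambda>i. if i < k then i else if i = k then n - 1 else if i < n then i - 1 else i) a') = a'"
    using assms by (auto simp: cyc_def)
  show "cyc k n ` {..<r} \<subseteq> {..<r}" using assms by (auto simp: cyc_def)
  show "(\<lambda>i. if i < k then i else if i = k then n - 1 else if i < n then i - 1 else i) ` {..<r} \<subseteq> {..<r}"
    using assms by auto
qed

lemma hj_sym:
  assumes sym: "symmetric_fun m r h" and kn: "k < n" and nr: "n \<le> r" and x: "x \<in> tuples m n"
  shows "Eint m p k (hj m p r h n) x = hj m p r h (n - 1) (del k x)"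
proof -
  have rn: "r - (n - 1) = Suc (r - n)" using kn nr by simp
  have key: "h (restrict (app (n - 1) (del k x) (ins (r - n) 0 z y)) {..<r}) = h (restrict (app n (x(k:=z)) y) {..<r})"
    if z: "z \<in> cube m" and y: "y \<in> tuples m (r - n)" for z y
  proof -
    define v where "v = restrict (app n (x(k:=z)) y) {..<r}"
    have vt: "v \<in> tuples m r"
      using x y z kn nr unfolding v_def tuples_iff by (auto simp: app_def)
    have "restrict (v \<circ> cyc k n) {..<r} = restrict (app (n - 1) (del k x) (ins (r - n) 0 z y)) {..<r}"
    proof (rule ext)
      fix i
      show "restrict (v \<circ> cyc k n) {..<r} i = restrict (app (n - 1) (del k x) (ins (r - n) 0 z y)) {..<r} i"
        using kn nr unfolding v_def
        by (auto simp: cyc_def app_def del_def ins_def)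
    qed
    then show ?thesis
      using sym cyc_bij[OF kn nr] vt unfolding symmetric_fun_def v_def by metis
  qed
  have "hj m p r h (n - 1) (del k x) = (\<Sum>z\<in>cube m. \<Sum>y\<in>tuples m (r - n). mu m p z * weight m p (r - n) y * h (restrict (app (n - 1) (del k x) (ins (r - n) 0 z y)) {..<r}))"
    unfolding hj_def rn by (rule sum_ins) simp
  also have "\<dots> = (\<Sum>z\<in>cube m. \<Sum>y\<in>tuples m (r - n). mu m p z * weight m p (r - n) y * h (restrict (app n (x(k:=z)) y) {..<r}))"
    by (intro sum.cong refl) (metis key)
  also have "\<dots> = Eint m p k (hj m p r h n) x"
    unfolding Eint_def hj_def by (simp add: sum_distrib_left mult.assoc)
  finally show ?thesis by simp
qed

lemma phis_transfer:
  assumes FS: "\<And>x. x \<in> S \<Longrightarrow> F x = F' (g x)"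
    and SS: "\<And>x k z. x \<in> S \<Longrightarrow> k < s \<Longrightarrow> z \<in> cube m \<Longrightarrow> x(k:=z) \<in> S"
    and gS: "\<And>x k z. k < s \<Longrightarrow> g (x(k:=z)) = (g x)(k:=z)"
  shows "x \<in> S \<Longrightarrow> phis m p s F x = phis m p s F' (g x)"
  using SS gS
proof (induction s arbitrary: x)
  case 0 then show ?case using FS by simp
next
  case (Suc s)
  have IH: "y \<in> S \<Longrightarrow> phis m p s F y = phis m p s F' (g y)" for y
    using Suc.IH[of y] Suc.prems by auto
  have "phis m p (Suc s) F x = phis m p s F x - (\<Sum>z\<in>cube m. mu m p z * phis m p s F (x(s:=z)))"
    by (simp add: Phi_eq Eint_def)
  also have "\<dots> = phis m p s F' (g x) - (\<Sum>z\<in>cube m. mu m p z * phis m p s F' ((g x)(s:=z)))"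
  proof -
    have "phis m p s F (x(s:=z)) = phis m p s F' ((g x)(s:=z))" if z: "z \<in> cube m" for z
    proof -
      have "x(s:=z) \<in> S" using Suc.prems z by blast
      moreover have "g (x(s:=z)) = (g x)(s:=z)" using Suc.prems by blast
      ultimately show ?thesis using IH by metis
    qed
    then show ?thesis using IH[OF \<open>x \<in> S\<close>] by (simp del: fun_upd_apply cong: sum.cong)
  qed
  also have "\<dots> = phis m p (Suc s) F' (g x)"
    by (simp add: Phi_eq Eint_def)
  finally show ?case .
qed



definition Gf :: "nat \<Rightarrow> real \<Rightarrow> nat \<Rightarrow> ((nat \<Rightarrow> nat set) \<Rightarrow> real) \<Rightarrow> nat \<Rightarrow> nat \<Rightarrow> nat \<Rightarrow> (nat \<Rightarrow> nat set) \<Rightarrow> real" where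
  "Gf m p r h a t c u = (\<Sum>w\<in>tuples m a. weight m p a w * (hj m p r h (a + c) (join a c w u) * phis m p t (hj m p r h a) w))"

lemma del_join: "s < Suc b \<Longrightarrow> del s (join (Suc b) c w u) = join b c (del s w) u"
  by (auto simp: fun_eq_iff del_def join_apply)

lemma del_upd: "k < s \<Longrightarrow> del s (x(k:=z)) = (del s x)(k:=z)"
  by (auto simp: fun_eq_iff del_def)

lemma Gf_rec:
  assumes sym: "symmetric_fun m r h" and sb: "s \<le> b" and r: "Suc b + c \<le> r" and u: "u \<in> tuples m c"
  shows "Gf m p r h (Suc b) (Suc s) c u = Gf m p r h (Suc b) s c u - Gf m p r h b s c u"
proof -
  define H where "H = (\<lambda>w. hj m p r h (Suc b + c) (join (Suc b) c w u))"
  define P where "P = phis m p s (hj m p r h (Suc b))"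
  have s1: "s < Suc b" using sb by simp
  have EH: "Eint m p s H w = hj m p r h (b + c) (join b c (del s w) u)" if w: "w \<in> tuples m (Suc b)" for w
  proof -
    have "Eint m p s H w = Eint m p s (hj m p r h (Suc b + c)) (join (Suc b) c w u)"
      unfolding H_def Eint_def by (simp add: join_upd_left[OF s1])
    also have "\<dots> = hj m p r h (Suc b + c - 1) (del s (join (Suc b) c w u))"
      by (rule hj_sym[OF sym]) (use s1 r join_tuples[OF w u] in auto)
    finally show ?thesis by (simp add: del_join[OF s1])
  qed
  have EP: "Eint m p s P w = phis m p s (hj m p r h b) (del s w)" if w: "w \<in> tuples m (Suc b)" for w
  proof -
    have "Eint m p s P w = phis m p s (Eint m p s (hj m p r h (Suc b))) w"
      unfolding P_def Eint_phis_comm[OF order_refl] ..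
    also have "\<dots> = phis m p s (hj m p r h b) (del s w)"
    proof (rule phis_transfer[where S="tuples m (Suc b)"])
      show "Eint m p s (hj m p r h (Suc b)) x = hj m p r h b (del s x)" if "x \<in> tuples m (Suc b)" for x
        using hj_sym[OF sym s1 _ that, of p] r by simp
      show "x(k:=z) \<in> tuples m (Suc b)" if "x \<in> tuples m (Suc b)" "k < s" "z \<in> cube m" for x k z
        using upd_tuples[OF that(1) _ that(3), of k] that(2) s1 by simp
      show "del s (x(k:=z)) = (del s x)(k:=z)" if "k < s" for x k z
        by (rule del_upd[OF that])
    qed (rule w)
    finally show ?thesis .
  qed
  have "Gf m p r h (Suc b) (Suc s) c u = (\<Sum>w\<in>tuples m (Suc b). weight m p (Suc b) w * (H w * P w))
        - (\<Sum>w\<in>tuples m (Suc b). weight m p (Suc b) w * (H w * Eint m p s P w))"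
    unfolding Gf_def H_def P_def by (simp add: Phi_eq algebra_simps sum_subtractf)
  also have "(\<Sum>w\<in>tuples m (Suc b). weight m p (Suc b) w * (H w * Eint m p s P w))
      = (\<Sum>w\<in>tuples m (Suc b). weight m p (Suc b) w * (Eint m p s H w * P w))"
    by (rule selfadj[OF s1, symmetric])
  also have "\<dots> = (\<Sum>w\<in>tuples m (Suc b). weight m p (Suc b) w * (Eint m p s (Eint m p s H) w * P w))"
    by (simp add: Eint_idem)
  also have "\<dots> = (\<Sum>w\<in>tuples m (Suc b). weight m p (Suc b) w * (Eint m p s H w * Eint m p s P w))"
    by (rule selfadj[OF s1])
  also have "\<dots> = (\<Sum>w\<in>tuples m (Suc b). weight m p (Suc b) w * (hj m p r h (b + c) (join b c (del s w) u) * phis m p s (hj m p r h b) (del s w)))"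
    by (intro sum.cong refl) (simp add: EH EP)
  also have "\<dots> = Gf m p r h b s c u"
    unfolding Gf_def by (rule sum_del[OF sb])
  finally show ?thesis unfolding Gf_def H_def P_def by simp
qed

lemma norm2_L2: "0 \<le> p \<Longrightarrow> p \<le> 1 \<Longrightarrow> norm2 m p c F = L2_set (\<lambda>u. sqrt (weight m p c u) * F u) (tuples m c)"
  unfolding norm2_def L2_set_def intk_def
  by (intro arg_cong[where f=sqrt] sum.cong refl) (simp add: power_mult_distrib weight_nonneg)

lemma norm2_diff:
  assumes p: "0 \<le> p" "p \<le> 1" and e: "\<And>u. u \<in> tuples m c \<Longrightarrow> F u = G u - H u"
  shows "norm2 m p c F \<le> norm2 m p c G + norm2 m p c H"
proof -
  have "norm2 m p c F = L2_set (\<lambda>u. sqrt (weight m p c u) * G u + (- (sqrt (weight m p c u) * H u))) (tuples m c)"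
    unfolding norm2_L2[OF p] by (intro L2_set_cong refl) (simp add: e algebra_simps)
  also have "\<dots> \<le> L2_set (\<lambda>u. sqrt (weight m p c u) * G u) (tuples m c) + L2_set (\<lambda>u. - (sqrt (weight m p c u) * H u)) (tuples m c)"
    by (rule L2_set_triangle_ineq)
  also have "L2_set (\<lambda>u. - (sqrt (weight m p c u) * H u)) (tuples m c) = L2_set (\<lambda>u. sqrt (weight m p c u) * H u) (tuples m c)"
    unfolding L2_set_def by simp
  finally show ?thesis unfolding norm2_L2[OF p] .
qed

lemma norm2_nonneg: "0 \<le> p \<Longrightarrow> p \<le> 1 \<Longrightarrow> 0 \<le> norm2 m p c F"
  unfolding norm2_def by (simp add: intk_nonneg)

lemma Gf_bound:
  assumes sym: "symmetric_fun m r h" and p: "0 \<le> p" "p \<le> 1"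
  shows "t \<le> a \<Longrightarrow> a + c \<le> r \<Longrightarrow> norm2 m p c (Gf m p r h a t c) \<le> 2^t * (\<Sum>s\<le>a. norm2 m p c (Gf m p r h s 0 c))"
proof (induction t arbitrary: a)
  case 0
  show ?case by (simp, rule member_le_sum) (auto simp: norm2_nonneg[OF p])
next
  case (Suc t)
  then obtain b where a: "a = Suc b" and tb: "t \<le> b" by (cases a) auto
  have "norm2 m p c (Gf m p r h a (Suc t) c) \<le> norm2 m p c (Gf m p r h a t c) + norm2 m p c (Gf m p r h b t c)"
    by (rule norm2_diff[OF p]) (use Gf_rec[OF sym tb] Suc.prems a in auto)
  also have "\<dots> \<le> 2^t * (\<Sum>s\<le>a. norm2 m p c (Gf m p r h s 0 c)) + 2^t * (\<Sum>s\<le>b. norm2 m p c (Gf m p r h s 0 c))"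
    using Suc.IH[of a] Suc.IH[of b] Suc.prems a tb by (intro add_mono) auto
  also have "(\<Sum>s\<le>b. norm2 m p c (Gf m p r h s 0 c)) \<le> (\<Sum>s\<le>a. norm2 m p c (Gf m p r h s 0 c))"
    unfolding a by (rule sum_mono2) (auto simp: norm2_nonneg[OF p])
  finally show ?case by simp
qed



lemma Phi_lin: "Phi m p k (\<lambda>u. \<Sum>w\<in>W. f w * G w u * g w) u = (\<Sum>w\<in>W. f w * Phi m p k (G w) u * g w)"
proof -
  have "Eint m p k (\<lambda>u. \<Sum>w\<in>W. f w * G w u * g w) u = (\<Sum>w\<in>W. f w * Eint m p k (G w) u * g w)"
    unfolding Eint_sum by (intro sum.cong refl) (simp add: Eint_def sum_distrib_left sum_distrib_right algebra_simps)
  then show ?thesis unfolding Phi_eq by (simp add: sum_subtractf[symmetric] algebra_simps)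
qed

lemma stepA:
  assumes "t \<le> c"
  shows "(\<lambda>u. \<Sum>w\<in>tuples m i. weight m p i w * phis m p (i+t) Q (join i c w u) * B w)
       = phis m p t (\<lambda>u. \<Sum>w\<in>tuples m i. weight m p i w * phis m p i Q (join i c w u) * B w)"
  using assms
proof (induction t)
  case 0 then show ?case by simp
next
  case (Suc t)
  then have tc: "t < c" by simp
  have "(\<lambda>u. \<Sum>w\<in>tuples m i. weight m p i w * phis m p (i + Suc t) Q (join i c w u) * B w)
      = (\<lambda>u. \<Sum>w\<in>tuples m i. weight m p i w * Phi m p t (\<lambda>u. phis m p (i+t) Q (join i c w u)) u * B w)"
    by (simp add: Phi_join_right[OF tc])
  also have "\<dots> = Phi m p t (\<lambda>u. \<Sum>w\<in>tuples m i. weight m p i w * phis m p (i+t) Q (join i c w u) * B w)"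
    by (rule ext, rule Phi_lin[symmetric])
  also have "\<dots> = phis m p (Suc t) (\<lambda>u. \<Sum>w\<in>tuples m i. weight m p i w * phis m p i Q (join i c w u) * B w)"
    using Suc by simp
  finally show ?case .
qed

lemma Eint_join_left: "s < i \<Longrightarrow> Eint m p s F (join i c w u) = Eint m p s (\<lambda>w. F (join i c w u)) w"
  by (simp add: Eint_def join_upd_left)

lemma stepC:
  assumes "s \<le> i"
  shows "(\<Sum>w\<in>tuples m i. weight m p i w * (phis m p s Q (join i c w u) * phis m p i R w))
       = (\<Sum>w\<in>tuples m i. weight m p i w * (Q (join i c w u) * phis m p i R w))"
  using assms
proof (induction s)
  case 0 then show ?case by simp
next
  case (Suc s)
  then have si: "s < i" by simp
  define A where "A = (\<lambda>w. phis m p s Q (join i c w u))"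
  have "(\<Sum>w\<in>tuples m i. weight m p i w * (phis m p (Suc s) Q (join i c w u) * phis m p i R w))
      = (\<Sum>w\<in>tuples m i. weight m p i w * (A w * phis m p i R w)) - (\<Sum>w\<in>tuples m i. weight m p i w * (Eint m p s A w * phis m p i R w))"
    unfolding A_def by (simp add: Phi_eq Eint_join_left[OF si] algebra_simps sum_subtractf)
  also have "(\<Sum>w\<in>tuples m i. weight m p i w * (Eint m p s A w * phis m p i R w)) = (\<Sum>w\<in>tuples m i. weight m p i w * (A w * Eint m p s (phis m p i R) w))"
    by (rule selfadj[OF si])
  also have "\<dots> = 0" by (simp add: Eint_phis_degen[OF si])
  finally show ?case using Suc by (simp add: A_def)
qed

lemma restrict_app_tuples: "w \<in> tuples m i \<Longrightarrow> restrict (app i w X) {..<i} = w"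
  by (auto simp: fun_eq_iff app_def tuples_iff)

lemma claim3:
  assumes sym: "symmetric_fun m r h" and p: "0 \<le> p" "p \<le> 1" and r: "i + c \<le> r"
  shows "norm2 m p c (contr m p (i+c) i i i (htilde m p r h (i+c)) (htilde m p r h i))
     \<le> 2^i * (norm2 m p c (hj m p r h c) * \<bar>intk m p r h\<bar>
           + (\<Sum>s=1..i. norm2 m p c (contr m p (c + s) s s s (hj m p r h (c + s)) (hj m p r h s))))"
proof -
  define T0 where "T0 = (\<lambda>u. \<Sum>w\<in>tuples m i. weight m p i w * phis m p i (hj m p r h (i+c)) (join i c w u) * phis m p i (hj m p r h i) w)"
  have e1: "contr m p (i+c) i i i (htilde m p r h (i+c)) (htilde m p r h i) = phis m p c T0"
  proof -
    have "contr m p (i+c) i i i (htilde m p r h (i+c)) (htilde m p r h i)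
        = (\<lambda>u. \<Sum>w\<in>tuples m i. weight m p i w * phis m p (i+c) (hj m p r h (i+c)) (join i c w u) * phis m p i (hj m p r h i) w)"
      unfolding contr_def htilde_def join_def
      by (intro ext sum.cong refl) (simp add: restrict_app_tuples)
    then show ?thesis unfolding T0_def stepA[OF order_refl] .
  qed
  have e2: "T0 = Gf m p r h i i c"
    unfolding T0_def Gf_def
    using stepC[OF order_refl, of m p i "hj m p r h (i+c)" c _ "hj m p r h i"]
    by (simp add: mult.assoc)
  have n1: "norm2 m p c (phis m p c T0) \<le> norm2 m p c T0"
    unfolding norm2_def intk_def using L2_phis[OF order_refl p] by simp
  have g00: "Gf m p r h 0 0 c u = hj m p r h c u * intk m p r h" for u
  proof -
    have "app c (join 0 c (\<lambda>_. undefined) u) y = app c u y" for y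
      by (auto simp: fun_eq_iff app_def join_apply)
    moreover have "hj m p r h 0 (\<lambda>_. undefined) = intk m p r h"
      unfolding hj_def intk_def
      by (intro sum.cong refl) (auto simp: app_def tuples_iff fun_eq_iff intro!: arg_cong[where f=h])
    ultimately show ?thesis by (simp add: Gf_def tuples_0 weight_0 hj_def)
  qed
  have ng00: "norm2 m p c (Gf m p r h 0 0 c) = norm2 m p c (hj m p r h c) * \<bar>intk m p r h\<bar>"
    unfolding norm2_def g00
    by (simp add: intk_def power_mult_distrib sum_distrib_right[symmetric] mult.assoc[symmetric] real_sqrt_mult)
  have gs: "Gf m p r h s 0 c = contr m p (c + s) s s s (hj m p r h (c + s)) (hj m p r h s)" for s
    unfolding Gf_def contr_def join_def
    by (intro ext sum.cong refl) (simp add: restrict_app_tuples add.commute)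
  have "norm2 m p c (contr m p (i+c) i i i (htilde m p r h (i+c)) (htilde m p r h i)) \<le> norm2 m p c (Gf m p r h i i c)"
    using n1 unfolding e1 e2 .
  also have "\<dots> \<le> 2^i * (\<Sum>s\<le>i. norm2 m p c (Gf m p r h s 0 c))"
    by (rule Gf_bound[OF sym p order_refl r])
  also have "(\<Sum>s\<le>i. norm2 m p c (Gf m p r h s 0 c)) = norm2 m p c (Gf m p r h 0 0 c) + (\<Sum>s=1..i. norm2 m p c (Gf m p r h s 0 c))"
    by (simp add: atMost_atLeast0 sum.atLeast_Suc_atMost)
  also have "(\<Sum>s=1..i. norm2 m p c (Gf m p r h s 0 c)) = (\<Sum>s=1..i. norm2 m p c (contr m p (c + s) s s s (hj m p r h (c + s)) (hj m p r h s)))"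
    by (simp add: gs)
  finally show ?thesis by (simp only: ng00)
qed



lemma contr_claim1: "contr m p (i+c) (i+c) i (i+c) f f = Ncl m p i c f"
proof (rule ext)
  fix u
  have "restrict (app i w (app c u (sh c u))) {..<i+c} = join i c w u" for w
    by (auto simp: fun_eq_iff join_def app_def)
  then show "contr m p (i+c) (i+c) i (i+c) f f u = Ncl m p i c f u"
    unfolding contr_def Ncl_def by (simp add: join_def[symmetric] power2_eq_square mult.assoc)
qed

lemma contr_claim2: "contr m p (i+c) (i+c) i i f f = Gam m p i c f"
proof (rule ext)
  fix u
  have "app 0 u X = X" for X :: "nat \<Rightarrow> nat set" by (simp add: app_def)
  then show "contr m p (i+c) (i+c) i i f f u = Gam m p i c f u"
    unfolding contr_def Gam_def by (simp add: join_def[symmetric])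
qed

lemma sqrt16: "sqrt (16^j * X) = 4^j * sqrt X"
proof -
  have "(16::real)^j = (4*4)^j" by simp
  also have "\<dots> = (4^j)^2" by (simp only: power_mult_distrib power2_eq_square)
  finally have "(16::real)^j = (4^j)^2" .
  then show ?thesis by (simp add: real_sqrt_mult)
qed

theorem lemma4p2:
  fixes r :: nat
  shows "\<exists>C::real. \<forall>(m::nat) (p::real) h i j.
     0 < p \<and> p < 1 \<and> symmetric_fun m r h \<and> i < j \<and> j \<le> r \<longrightarrow>
       norm2 m p (j - i) (contr m p j j i j (htilde m p r h j) (htilde m p r h j))
         \<le> C * norm2 m p (j - i) (contr m p j j i j (hj m p r h j) (hj m p r h j))
     \<and> norm2 m p (2 * (j - i)) (contr m p j j i i (htilde m p r h j) (htilde m p r h j))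
         \<le> C * norm2 m p (2 * (j - i)) (contr m p j j i i (hj m p r h j) (hj m p r h j))
     \<and> norm2 m p (j - i) (contr m p j i i i (htilde m p r h j) (htilde m p r h i))
         \<le> C * (norm2 m p (j - i) (hj m p r h (j - i)) * \<bar>intk m p r h\<bar>
                + (\<Sum>s=1..i. norm2 m p (j - i)
                     (contr m p (j - i + s) s s s (hj m p r h (j - i + s)) (hj m p r h s))))"
proof (intro exI[of _ "4^r"] allI impI)
  fix m :: nat and p :: real and h i j
  assume A: "0 < p \<and> p < 1 \<and> symmetric_fun m r h \<and> i < j \<and> j \<le> r"
  then have p: "0 \<le> p" "p \<le> 1" and sym: "symmetric_fun m r h" and ij: "i < j" and jr: "j \<le> r" by auto
  define c where "c = j - i"
  have j: "j = i + c" using ij by (simp add: c_def)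
  have jr': "i + c \<le> r" using jr j by simp
  have C1: "(4::real)^j \<le> 4^r" using jr by (simp add: power_increasing)
  have C2: "(2::real)^i \<le> 4^r"
  proof -
    have "(2::real)^i \<le> 4^i" by (simp add: power_mono)
    also have "\<dots> \<le> 4^r" using ij jr by (simp add: power_increasing)
    finally show ?thesis .
  qed
  have c1: "norm2 m p c (contr m p j j i j (htilde m p r h j) (htilde m p r h j))
         \<le> 4^r * norm2 m p c (contr m p j j i j (hj m p r h j) (hj m p r h j))"
  proof -
    have "norm2 m p c (contr m p j j i j (htilde m p r h j) (htilde m p r h j))
        = sqrt (intk m p c (\<lambda>u. (Ncl m p i c (phis m p j (hj m p r h j)) u)^2))"
      unfolding norm2_def j contr_claim1 htilde_def ..
    also have "\<dots> \<le> sqrt (16^j * intk m p c (\<lambda>u. (Ncl m p i c (hj m p r h j) u)^2))"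
      using N_phis[OF p, of j i c m "hj m p r h j"] j by simp
    also have "\<dots> = 4^j * norm2 m p c (contr m p j j i j (hj m p r h j) (hj m p r h j))"
      unfolding sqrt16 norm2_def j contr_claim1 ..
    also have "\<dots> \<le> 4^r * norm2 m p c (contr m p j j i j (hj m p r h j) (hj m p r h j))"
      by (rule mult_right_mono[OF C1 norm2_nonneg[OF p]])
    finally show ?thesis .
  qed
  have c2: "norm2 m p (2*c) (contr m p j j i i (htilde m p r h j) (htilde m p r h j))
         \<le> 4^r * norm2 m p (2*c) (contr m p j j i i (hj m p r h j) (hj m p r h j))"
  proof -
    have "norm2 m p (2*c) (contr m p j j i i (htilde m p r h j) (htilde m p r h j))
        = sqrt (intk m p (2*c) (\<lambda>u. (Gam m p i c (phis m p j (hj m p r h j)) u)^2))"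
      unfolding norm2_def j contr_claim2 htilde_def ..
    also have "\<dots> \<le> sqrt (intk m p (2*c) (\<lambda>u. (Gam m p i c (hj m p r h j) u)^2))"
      using Gam_phis[OF p, of j i c m "hj m p r h j"] j by simp
    also have "\<dots> = norm2 m p (2*c) (contr m p j j i i (hj m p r h j) (hj m p r h j))"
      unfolding norm2_def j contr_claim2 ..
    also have "\<dots> \<le> 4^r * norm2 m p (2*c) (contr m p j j i i (hj m p r h j) (hj m p r h j))"
      using mult_right_mono[OF _ norm2_nonneg[OF p], of 1 "4^r" m "2*c"] by simp
    finally show ?thesis .
  qed
  define R where "R = norm2 m p c (hj m p r h c) * \<bar>intk m p r h\<bar>
           + (\<Sum>s=1..i. norm2 m p c (contr m p (c + s) s s s (hj m p r h (c + s)) (hj m p r h s)))"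
  have R0: "0 \<le> R" unfolding R_def
    by (intro add_nonneg_nonneg mult_nonneg_nonneg sum_nonneg norm2_nonneg[OF p]) auto
  have c3: "norm2 m p c (contr m p j i i i (htilde m p r h j) (htilde m p r h i)) \<le> 4^r * R"
  proof -
    have "norm2 m p c (contr m p j i i i (htilde m p r h j) (htilde m p r h i)) \<le> 2^i * R"
      unfolding R_def j by (rule claim3[OF sym p jr'])
    also have "\<dots> \<le> 4^r * R" by (rule mult_right_mono[OF C2 R0])
    finally show ?thesis .
  qed
  show "norm2 m p (j - i) (contr m p j j i j (htilde m p r h j) (htilde m p r h j))
         \<le> 4^r * norm2 m p (j - i) (contr m p j j i j (hj m p r h j) (hj m p r h j))
     \<and> norm2 m p (2 * (j - i)) (contr m p j j i i (htilde m p r h j) (htilde m p r h j))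
         \<le> 4^r * norm2 m p (2 * (j - i)) (contr m p j j i i (hj m p r h j) (hj m p r h j))
     \<and> norm2 m p (j - i) (contr m p j i i i (htilde m p r h j) (htilde m p r h i))
         \<le> 4^r * (norm2 m p (j - i) (hj m p r h (j - i)) * \<bar>intk m p r h\<bar>
                + (\<Sum>s=1..i. norm2 m p (j - i)
                     (contr m p (j - i + s) s s s (hj m p r h (j - i + s)) (hj m p r h s))))"
    using c1 c2 c3 unfolding R_def c_def[symmetric] by simp
qed

end
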